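(* For $n\ge1$ and $k\in[n]$, let $a_{n,k}$ be the number of permutations $\pi\in\mathcal S_n$ avoiding $(123,\{0,2\},\emptyset)$ with $\pi_1=k$. Then \[a_{n,k}=\begin{cases}(k-1)!\,k^{\,n-k}&\text{for }k=1,2,\dots,n-2,\\ (n-1)!&\text{if }k=n-1\text{ or }k=n.\end{cases}\]
   Context: For $n\ge1$, $\mathcal S_n$ is the set of permutations $\pi=\pi_1\cdots\pi_n$ of $[n]$. A bi-vincular pattern of length $k$ is a triple $p=(\sigma,X,Y)$ with $\sigma\in\mathcal S_k$ and $X,Y\subseteq\{0,1,\dots,k\}$. A permutation $\pi\in\mathcal S_n$ contains $p$ if there are indices $1\le i_1<\dots<i_k\le n$ such that $(\pi_{i_1},\dots,\pi_{i_k})$ is order-isomorphic to $\sigma$ and, letting $j_1<\dots<j_k$ be the values $\pi_{i_1},\dots,\pi_{i_k}$ sorted increasingly and setting $i_0=j_0=0$, $i_{k+1}=j_{k+1}=n+1$, one has $i_{x+1}=i_x+1$ for all $x\in X$ and $j_{y+1}=j_y+1$ for all $y\in Y$. Otherwise $\pi$ avoids $p$. *)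

theory Defs
  imports Main "HOL-Combinatorics.Multiset_Permutations"
begin

(* Permutations of [n] are lists p = [pi_1,...,pi_n] (one-line notation);
   pi_i is written  p ! (i - 1). A bi-vincular pattern is (sigma, X, Y) with
   sigma a permutation of [k] given as a list. *)

definition perms :: "nat \<Rightarrow> nat list set" where
  "perms n = permutations_of_set {1..n}"

definition order_iso :: "nat list \<Rightarrow> nat list \<Rightarrow> bool" where
  "order_iso xs ys \<longleftrightarrow> length xs = length ys \<and>
     (\<forall>a < length xs. \<forall>b < length xs. (xs ! a < xs ! b \<longleftrightarrow> ys ! a < ys ! b))"

(* p contains the bi-vincular pattern (sigma, X, Y).
   ii : indices i_1 < ... < i_k (1-based), extended by i_0 = 0, i_(k+1) = n+1;
   jj : the values pi_(i_1),...,pi_(i_k) sorted increasingly, extended by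
        j_0 = 0, j_(k+1) = n+1. *)
definition contains_bv :: "nat list \<Rightarrow> nat list \<Rightarrow> nat set \<Rightarrow> nat set \<Rightarrow> bool" where
  "contains_bv p sigma X Y \<longleftrightarrow>
     (let n = length p; k = length sigma in
      \<exists>i :: nat \<Rightarrow> nat.
        (\<forall>t \<in> {1..k}. 1 \<le> i t \<and> i t \<le> n) \<and>
        (\<forall>s \<in> {1..k}. \<forall>t \<in> {1..k}. s < t \<longrightarrow> i s < i t) \<and>
        (let vals = map (\<lambda>t. p ! (i t - 1)) [1..<k+1];
             js = sort vals;
             ii = (\<lambda>x. if x = 0 then 0 else if x = k + 1 then n + 1 else i x);
             jj = (\<lambda>y. if y = 0 then 0 else if y = k + 1 then n + 1 else js ! (y - 1))
         in order_iso vals sigma \<and>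
            (\<forall>x \<in> X. ii (x + 1) = ii x + 1) \<and>
            (\<forall>y \<in> Y. jj (y + 1) = jj y + 1)))"

definition avoids_bv :: "nat list \<Rightarrow> nat list \<Rightarrow> nat set \<Rightarrow> nat set \<Rightarrow> bool" where
  "avoids_bv p sigma X Y \<longleftrightarrow> \<not> contains_bv p sigma X Y"

definition a_nk :: "nat \<Rightarrow> nat \<Rightarrow> nat" where
  "a_nk n k = card {p \<in> perms n. avoids_bv p [1,2,3] {0,2} {} \<and> p ! 0 = k}"

end

theory Submission
  imports Defs
begin


lemma ball3: "(\<forall>t\<in>{1..3::nat}. P t) \<longleftrightarrow> P 1 \<and> P 2 \<and> P 3"
  by (auto simp: numeral_3_eq_3 le_Suc_eq) (metis One_nat_def Suc_1 le_Suc_eq le_antisym not_less_eq_eq)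

lemma all3: "(\<forall>a<3::nat. P a) \<longleftrightarrow> P 0 \<and> P 1 \<and> P 2"
  by (auto simp: numeral_3_eq_3 less_Suc_eq numeral_2_eq_2)

lemma upt3: "[1..<3+1] = [1,2,3::nat]"
  by (simp add: upt_rec)

lemma contains_iff:
  "contains_bv p [1,2,3] {0,2} {} \<longleftrightarrow>
   (\<exists>j. 1 \<le> j \<and> j+1 < length p \<and> p!0 < p!j \<and> p!j < p!(j+1))"
proof
  assume "contains_bv p [1,2,3] {0,2} {}"
  then have "\<exists>i::nat\<Rightarrow>nat. i 1 = 1 \<and> i 3 = i 2 + 1 \<and> 1 < i 2 \<and> i 3 \<le> length p \<and>
     p!0 < p!(i 2 - 1) \<and> p!(i 2 - 1) < p!(i 3 - 1)"
    unfolding contains_bv_def Let_def order_iso_def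
    apply (elim exE)
    subgoal for i
      apply (rule exI[of _ i])
      apply (simp add: upt3)
      apply (simp add: numeral_3_eq_3 numeral_2_eq_2 less_Suc_eq le_Suc_eq)
      apply (elim conjE)
      subgoal premises P
      proof -
        have "Suc 0 < i (Suc (Suc 0))" using P(2,4) by (metis atLeastAtMost_iff le_Suc_eq lessI order_refl)
        moreover have "i (Suc (Suc (Suc 0))) \<le> length p" using P(1) by auto
        moreover have "p ! (i (Suc 0) - Suc 0) < p ! (i (Suc (Suc 0)) - Suc 0)" 
          using spec[OF P(3), of 0] by auto
        moreover have "p ! (i (Suc (Suc 0)) - Suc 0) < p ! (i (Suc (Suc (Suc 0))) - Suc 0)" 
          using spec[OF P(3), of 1] by auto
        ultimately show ?thesis using P(4,5) by simp
      qed
      done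
    done
  then obtain i :: "nat \<Rightarrow> nat" where h: "i 1 = 1" "i 3 = i 2 + 1" "1 < i 2" "i 3 \<le> length p"
     "p!0 < p!(i 2 - 1)" "p!(i 2 - 1) < p!(i 3 - 1)" by blast
  show "\<exists>j. 1 \<le> j \<and> j+1 < length p \<and> p!0 < p!j \<and> p!j < p!(j+1)"
    apply (rule exI[of _ "i 2 - 1"]) using h by auto
next
  assume "\<exists>j. 1 \<le> j \<and> j+1 < length p \<and> p!0 < p!j \<and> p!j < p!(j+1)"
  then obtain j where j: "1 \<le> j" "j+1 < length p" "p!0 < p!j" "p!j < p!(j+1)" by blast
  define i where "i = (\<lambda>t::nat. if t = 1 then 1 else if t = 2 then j+1 else j+2)"
  have oi: "order_iso [p!0, p!j, p!(j+1)] [1,2,3]"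
    unfolding order_iso_def using j by (auto simp: less_Suc_eq numeral_3_eq_3 numeral_2_eq_2)
  show "contains_bv p [1,2,3] {0,2} {}"
    unfolding contains_bv_def Let_def
    apply (rule exI[of _ i])
    using j oi by (auto simp: upt3 i_def ball3)
qed



fun good :: "nat \<Rightarrow> nat list \<Rightarrow> bool" where
  "good k [] = True"
| "good k (a # xs) = ((xs \<noteq> [] \<and> k < a \<longrightarrow> hd xs < a) \<and> good k xs)"

lemma good_nth: "good k t \<longleftrightarrow> (\<forall>j. j+1 < length t \<longrightarrow> k < t!j \<longrightarrow> t!(j+1) < t!j)"
proof (induction t)
  case Nil then show ?case by simp
next
  case (Cons a t)
  show ?case
  proof
    assume g: "good k (a # t)"
    show "\<forall>j. j+1 < length (a#t) \<longrightarrow> k < (a#t)!j \<longrightarrow> (a#t)!(j+1) < (a#t)!j"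
    proof (intro allI impI)
      fix j assume "j+1 < length (a#t)" "k < (a#t)!j"
      then show "(a#t)!(j+1) < (a#t)!j" using g Cons.IH
        by (cases j) (auto simp: hd_conv_nth)
    qed
  next
    assume h: "\<forall>j. j+1 < length (a#t) \<longrightarrow> k < (a#t)!j \<longrightarrow> (a#t)!(j+1) < (a#t)!j"
    have "good k t" unfolding Cons.IH
    proof (intro allI impI)
      fix j assume "j+1 < length t" "k < t!j"
      then show "t!(j+1) < t!j" using h[rule_format, of "Suc j"] by auto
    qed
    moreover have "t \<noteq> [] \<and> k < a \<longrightarrow> hd t < a"
      using h[rule_format, of 0] by (auto simp: hd_conv_nth)
    ultimately show "good k (a # t)" by simp
  qed
qed

lemma good_small: "\<forall>x\<in>set t. \<not> k < x \<Longrightarrow> good k t"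
  by (induction t) auto

lemma ins_good:
  assumes "\<forall>x\<in>set (us @ ws). x < v" "k < v"
  shows "good k (us @ v # ws) \<longleftrightarrow> good k (us @ ws) \<and> (us = [] \<or> \<not> k < last us)"
  using assms
proof (induction us)
  case Nil
  then show ?case by (cases ws) auto
next
  case (Cons a us)
  then show ?case by (cases us) (auto)
qed

definition G :: "nat \<Rightarrow> nat set \<Rightarrow> nat list set" where
  "G k S = {t \<in> permutations_of_set S. good k t}"

definition P :: "nat \<Rightarrow> nat list \<Rightarrow> nat set" where
  "P k t = {i. i \<le> length t \<and> (i = 0 \<or> \<not> k < t!(i-1))}"

lemma card_P:
  assumes "distinct t" "k \<notin> set t"
  shows "card (P k t) = card {x \<in> set t. x < k} + 1"
proof -
  have "P k t = insert 0 (Suc ` {j. j < length t \<and> \<not> k < t!j})"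
  proof (intro equalityI subsetI)
    fix i assume "i \<in> P k t"
    then show "i \<in> insert 0 (Suc ` {j. j < length t \<and> \<not> k < t!j})"
      unfolding P_def by (cases i) auto
  next
    fix i assume "i \<in> insert 0 (Suc ` {j. j < length t \<and> \<not> k < t!j})"
    then show "i \<in> P k t" unfolding P_def by auto
  qed
  then have "card (P k t) = card {j. j < length t \<and> \<not> k < t!j} + 1"
    by (simp add: card_image)
  also have "card {j. j < length t \<and> \<not> k < t!j} = length (filter (\<lambda>x. \<not> k < x) t)"
    by (simp add: length_filter_conv_card)
  also have "\<dots> = card (set (filter (\<lambda>x. \<not> k < x) t))"
    using assms(1) by (metis distinct_card distinct_filter)
  also have "set (filter (\<lambda>x. \<not> k < x) t) = {x \<in> set t. x < k}"
    using assms(2) by (auto simp: not_less nat_less_le)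
  finally show ?thesis .
qed

lemma take_last: "0 < i \<Longrightarrow> i \<le> length t \<Longrightarrow> last (take i t) = t!(i-1)"
  by (cases "take i t = []") (auto simp: last_conv_nth min_def)

lemma G_step:
  assumes "finite S" "v \<in> S" "\<forall>x\<in>S. x \<le> v" "k < v"
  shows "G k S = (\<lambda>(t,i). take i t @ v # drop i t) ` (SIGMA t:G k (S - {v}). P k t)"
proof
  show "G k S \<subseteq> (\<lambda>(t,i). take i t @ v # drop i t) ` (SIGMA t:G k (S - {v}). P k t)"
  proof
    fix t assume "t \<in> G k S"
    then have t: "set t = S" "distinct t" "good k t" by (auto simp: G_def permutations_of_set_def)
    then obtain us ws where uw: "t = us @ v # ws" using assms(2) by (metis split_list)
    have d: "distinct (us @ ws)" "v \<notin> set (us @ ws)" using t(2) uw by auto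
    have st: "set (us @ ws) = S - {v}" using t(1,2) uw by auto
    have lt: "\<forall>x\<in>set (us @ ws). x < v" using st assms(3) by fastforce
    have "good k (us @ v # ws)" using t(3) uw by simp
    note g0 = iffD1[OF ins_good[OF lt assms(4)] this]
    have g: "good k (us @ ws)" "us = [] \<or> \<not> k < last us" using g0 by blast+
    have "us @ ws \<in> G k (S - {v})" using d st g by (auto simp: G_def permutations_of_set_def)
    moreover have "length us \<in> P k (us @ ws)"
      using g(2) unfolding P_def by (auto simp: nth_append last_conv_nth)
    ultimately show "t \<in> (\<lambda>(t,i). take i t @ v # drop i t) ` (SIGMA t:G k (S - {v}). P k t)"
      using uw by (auto intro!: image_eqI[where x="(us @ ws, length us)"])
  qed
next
  show "(\<lambda>(t,i). take i t @ v # drop i t) ` (SIGMA t:G k (S - {v}). P k t) \<subseteq> G k S"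
  proof clarify
    fix t i assume t: "t \<in> G k (S - {v})" and i: "i \<in> P k t"
    have t': "set t = S - {v}" "distinct t" "good k t" using t by (auto simp: G_def permutations_of_set_def)
    have lt: "\<forall>x\<in>set (take i t @ drop i t). x < v" using t'(1) assms(3) by fastforce
    have il: "i \<le> length t" "i = 0 \<or> \<not> k < t!(i-1)" using i by (auto simp: P_def)
    have "take i t = [] \<or> \<not> k < last (take i t)"
      using il take_last[of i t] by auto
    moreover have "good k (take i t @ drop i t)" using t'(3) by simp
    ultimately have g: "good k (take i t @ v # drop i t)"
      by (intro iffD2[OF ins_good[OF lt assms(4)]] conjI)
    have st: "set t = set (take i t) \<union> set (drop i t)" by (metis append_take_drop_id set_append)
    have vt: "v \<notin> set t" using t'(1) by auto
    have dt: "distinct (take i t)" "distinct (drop i t)" "set (take i t) \<inter> set (drop i t) = {}"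
      using t'(2) by (metis append_take_drop_id distinct_append)+
    have "set (take i t @ v # drop i t) = S" 
      using t'(1) assms(2) st by auto
    moreover have "distinct (take i t @ v # drop i t)"
      using dt vt st by auto
    ultimately show "take i t @ v # drop i t \<in> G k S" using g unfolding G_def permutations_of_set_def by blast
  qed
qed

lemma G_inj:
  "inj_on (\<lambda>(t,i). take i t @ v # drop i t) (SIGMA t:G k (S - {v}). P k t)"
proof (rule inj_onI, clarify)
  fix t i u j assume t: "t \<in> G k (S - {v})" "i \<in> P k t" and u: "u \<in> G k (S - {v})" "j \<in> P k u"
    and eq: "take i t @ v # drop i t = take j u @ v # drop j u"
  have "v \<notin> set t" "v \<notin> set u" using t u by (auto simp: G_def permutations_of_set_def)
  then have "take i t = take j u" "drop i t = drop j u"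
    using eq append_Cons_eq_iff[of v "take i t" "drop i t" "take j u" "drop j u"]
    by (auto dest: in_set_takeD in_set_dropD)
  moreover have "i \<le> length t" "j \<le> length u" using t u by (auto simp: P_def)
  ultimately show "t = u \<and> i = j"
    by (metis append_take_drop_id length_take min.absorb2)
qed

lemma count_G:
  assumes "finite S" "k \<notin> S"
  shows "card (G k S) = fact (card {x\<in>S. x<k}) * (card {x\<in>S. x<k} + 1) ^ card {x\<in>S. k<x}"
  using assms
proof (induction "card {x\<in>S. k<x}" arbitrary: S)
  case 0
  then have "{x\<in>S. k<x} = {}" by auto
  then have e1: "G k S = permutations_of_set S"
    unfolding G_def permutations_of_set_def by (auto intro: good_small)
  have e2: "{x\<in>S. x<k} = S" using 0 \<open>{x\<in>S. k<x} = {}\<close> by (auto simp: not_less order.order_iff_strict)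
  have e3: "card {x\<in>S. k<x} = 0" using 0(1) by simp
  show ?case unfolding e1 e2 e3 using 0(2) by simp
next
  case (Suc m S)
  then have ne: "{x\<in>S. k<x} \<noteq> {}" by (metis card.empty nat.distinct(1))
  then have Sne: "S \<noteq> {}" by auto
  define v where "v = Max S"
  have vS: "v \<in> S" "\<forall>x\<in>S. x \<le> v" using Suc.prems Sne by (auto simp: v_def)
  have kv: "k < v" using ne vS by fastforce
  have fin': "finite (S - {v})" "k \<notin> S - {v}" using Suc.prems by auto
  have small: "{x\<in>S - {v}. x<k} = {x\<in>S. x<k}" using kv by auto
  have large: "{x\<in>S - {v}. k<x} = {x\<in>S. k<x} - {v}" by auto
  have "card {x\<in>S - {v}. k<x} = m" unfolding large using Suc.hyps(2) vS kv Suc.prems by simp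
  then have IH: "card (G k (S - {v})) = fact (card {x\<in>S. x<k}) * (card {x\<in>S. x<k} + 1) ^ m"
    using Suc.hyps(1)[OF _ fin'] small by simp
  have finG: "finite (G k (S - {v}))" unfolding G_def by simp
  have "card (G k S) = card (SIGMA t:G k (S - {v}). P k t)"
    unfolding G_step[OF Suc.prems(1) vS kv] by (rule card_image[OF G_inj])
  also have "\<dots> = (\<Sum>t\<in>G k (S - {v}). card (P k t))"
    using finG by (rule card_SigmaI) (auto simp: P_def)
  also have "\<dots> = (\<Sum>t\<in>G k (S - {v}). card {x\<in>S. x<k} + 1)"
  proof (rule sum.cong)
    fix t assume "t \<in> G k (S - {v})"
    then have "set t = S - {v}" "distinct t" by (auto simp: G_def permutations_of_set_def)
    then show "card (P k t) = card {x\<in>S. x<k} + 1"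
      using card_P[of t k] fin'(2) small by simp
  qed simp
  also have "\<dots> = card (G k (S - {v})) * (card {x\<in>S. x<k} + 1)" by simp
  finally have "card (G k S) = card (G k (S - {v})) * (card {x\<in>S. x<k} + 1)" .
  then show ?case unfolding IH Suc.hyps(2)[symmetric] by (simp add: algebra_simps)
qed


lemma avoids_good:
  assumes "distinct (k # t)"
  shows "avoids_bv (k # t) [1,2,3] {0,2} {} \<longleftrightarrow> good k t"
proof -
  have "contains_bv (k # t) [1,2,3] {0,2} {} \<longleftrightarrow>
        (\<exists>j. j+1 < length t \<and> k < t!j \<and> t!j < t!(j+1))"
    unfolding contains_iff
  proof
    assume "\<exists>j\<ge>1. j + 1 < length (k # t) \<and> (k # t) ! 0 < (k # t) ! j \<and> (k # t) ! j < (k # t) ! (j + 1)"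
    then obtain j where "j \<ge> 1" "j + 1 < length (k # t)" "(k # t) ! 0 < (k # t) ! j" "(k # t) ! j < (k # t) ! (j + 1)"
      by blast
    then show "\<exists>j. j+1 < length t \<and> k < t!j \<and> t!j < t!(j+1)"
      by (intro exI[of _ "j - 1"]) (cases j; auto)
  next
    assume "\<exists>j. j+1 < length t \<and> k < t!j \<and> t!j < t!(j+1)"
    then obtain j where "j+1 < length t" "k < t!j" "t!j < t!(j+1)" by blast
    then show "\<exists>j\<ge>1. j + 1 < length (k # t) \<and> (k # t) ! 0 < (k # t) ! j \<and> (k # t) ! j < (k # t) ! (j + 1)"
      by (intro exI[of _ "Suc j"]) auto
  qed
  moreover have "\<And>j. j+1 < length t \<Longrightarrow> t!j \<noteq> t!(j+1)"
    using assms by (auto simp: nth_eq_iff_index_eq)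
  ultimately show ?thesis unfolding avoids_bv_def good_nth
    by (metis linorder_neqE_nat less_not_sym)
qed

lemma a_nk_G:
  assumes "n \<ge> 1" "1 \<le> k" "k \<le> n"
  shows "a_nk n k = card (G k ({1..n} - {k}))"
proof -
  have eq: "{p \<in> perms n. avoids_bv p [1,2,3] {0,2} {} \<and> p ! 0 = k} = (\<lambda>t. k # t) ` G k ({1..n} - {k})"
  proof (intro equalityI subsetI)
    fix p assume "p \<in> {p \<in> perms n. avoids_bv p [1,2,3] {0,2} {} \<and> p ! 0 = k}"
    then have p: "set p = {1..n}" "distinct p" "avoids_bv p [1,2,3] {0,2} {}" "p!0 = k"
      by (auto simp: perms_def permutations_of_set_def)
    have "p \<noteq> []" using p(1) assms(1) by auto
    then obtain t where pt: "p = k # t" using p(4) by (cases p) auto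
    have dt: "distinct (k # t)" using p(2) pt by simp
    have "good k t" using iffD1[OF avoids_good[OF dt]] p(3) pt by simp
    moreover have "set t = set p - {k}" using dt pt by auto
    then have "set t = {1..n} - {k}" using p(1) by simp
    moreover have "distinct t" using dt by simp
    ultimately have "t \<in> G k ({1..n} - {k})"
      unfolding G_def permutations_of_set_def by blast
    then show "p \<in> (\<lambda>t. k # t) ` G k ({1..n} - {k})" unfolding pt by (rule imageI)
  next
    fix p assume "p \<in> (\<lambda>t. k # t) ` G k ({1..n} - {k})"
    then obtain t where pt: "p = k # t" and t: "t \<in> G k ({1..n} - {k})" by blast
    have t': "set t = {1..n} - {k}" "distinct t" "good k t" using t by (auto simp: G_def permutations_of_set_def)
    show "p \<in> {p \<in> perms n. avoids_bv p [1,2,3] {0,2} {} \<and> p ! 0 = k}"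
    proof -
      have kn: "k \<in> {1..n}" using assms by simp
      have "set p = insert k (set t)" using pt by simp
      also have "\<dots> = insert k ({1..n} - {k})" using t'(1) by simp
      also have "\<dots> = {1..n}" using kn by (rule insert_Diff)
      finally have "set p = {1..n}" .
      moreover have dp: "distinct (k # t)" using t'(1,2) by simp
      moreover have "avoids_bv p [1,2,3] {0,2} {}" unfolding pt using iffD2[OF avoids_good[OF dp] t'(3)] .
      moreover have "p ! 0 = k" using pt by simp
      moreover have "distinct p" using pt dp by simp
      ultimately have "p \<in> perms n" "avoids_bv p [1,2,3] {0,2} {}" "p ! 0 = k"
        unfolding perms_def by (auto intro: permutations_of_setI)
      then show ?thesis by (rule CollectI[of _ p, OF conjI[OF _ conjI]])
    qed
  qed
  have inj: "inj_on (\<lambda>t. k # t) (G k ({1..n} - {k}))" by (simp add: inj_on_def)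
  show ?thesis unfolding a_nk_def eq using card_image[OF inj] .
qed

theorem mainTheorem11:
  fixes n k :: nat
  assumes "n \<ge> 1" and "1 \<le> k" and "k \<le> n"
  shows "a_nk n k = (if k \<le> n - 2 then fact (k - 1) * k ^ (n - k) else fact (n - 1))"
proof -
  have s: "{x\<in>{1..n} - {k}. x<k} = {1..<k}" "{x\<in>{1..n} - {k}. k<x} = {k<..n}"
    using assms by auto
  have "a_nk n k = fact (k - 1) * k ^ (n - k)"
    unfolding a_nk_G[OF assms] using count_G[of "{1..n} - {k}" k] s assms by simp
  moreover have "k > n - 2 \<Longrightarrow> fact (k - 1) * k ^ (n - k) = (fact (n - 1) :: nat)"
  proof -
    assume "k > n - 2"
    then have "k = n \<or> (k = n - 1 \<and> n \<ge> 2)" using assms by auto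
    then show ?thesis
    proof
      assume "k = n" then show ?thesis by simp
    next
      assume h: "k = n - 1 \<and> n \<ge> 2"
      then have "n - 1 = Suc (k - 1)" "n - k = 1" by auto
      then show ?thesis using h by (simp add: fact_Suc)
    qed
  qed
  ultimately show ?thesis by auto
qed

end
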